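(* Let $n$ be a positive integer, let $A(n)=(a_{ij})_{i,j\in\mathbb{N}}$ be the greedy matrix described in the context, and let $\sigma=2n^3-n(n-3)$. Then there exist integers $pp\geq 0$ and $p\geq 1$ such that $a_{i+p,j+p}=a_{ij}$ for all $i>pp$ and all $j\ge 1$, and $pp+p\leq 2^{\sigma^2}$.
   Context: $\mathbb{N}=\{1,2,3,\dots\}$. Fix a positive integer $n$. The infinite $\{0,1\}$-matrix $A(n)=(a_{ij})_{i,j\in\mathbb{N}}$ is defined recursively. Its entries are determined row by row (row $1$ first), and within each row from left to right, so that $a_{kl}$ is determined after all $a_{ij}$ with $i<k$ and all $a_{kj}$ with $j<l$. One sets $a_{kl}=1$ if and only if all of the following hold: (1) $\sum_{j<l}a_{kj}<n+1$; (2) $\sum_{i<k}a_{il}<n+1$; (3) there is no pair $(i,j)$ with $1\le i<k$, $1\le j<l$ and $a_{ij}=a_{il}=a_{kj}=1$. Otherwise $a_{kl}=0$. *)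

theory Defs
  imports Main
begin

text \<open>The greedy matrix A(n). Indices are 1-based; entries with index 0 are
  defined to be 0 (False) and are never used by the statement.
  greedy n k l is the entry a_{kl} of A(n) (True means 1).\<close>

function greedy :: "nat \<Rightarrow> nat \<Rightarrow> nat \<Rightarrow> bool" where
  "greedy n k l =
     (if k = 0 \<or> l = 0 then False
      else
        length (filter (\<lambda>j. greedy n k j) [1..<l]) < n + 1 \<and>
        length (filter (\<lambda>i. greedy n i l) [1..<k]) < n + 1 \<and>
        \<not> (\<exists>i\<in>set [1..<k]. \<exists>j\<in>set [1..<l]. greedy n i j \<and> greedy n i l \<and> greedy n k j))"
  by pat_completeness auto
termination
  by (relation "inv_image (less_than <*lex*> less_than) (\<lambda>(n, k, l). (k, l))") auto

definition entry :: "nat \<Rightarrow> nat \<Rightarrow> nat \<Rightarrow> nat" where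
  "entry n i j = (if greedy n i j then 1 else 0)"

end

theory Submission
  imports Defs
begin

declare greedy.simps[simp del]

lemma g0[simp]: "\<not> greedy n 0 l" "\<not> greedy n k 0"
  by (subst greedy.simps; simp)+

lemma len_filter: "\<not> P 0 \<Longrightarrow> length (filter P [1..<l]) = card {j. j < l \<and> P j}"
proof -
  assume h: "\<not> P 0"
  have "length (filter P [1..<l]) = card (set (filter P [1..<l]))"
    by (metis distinct_card distinct_filter distinct_upt)
  also have "set (filter P [1..<l]) = {j. j < l \<and> P j}"
    using h by (auto, case_tac "x = 0", auto)
  finally show ?thesis .
qed

lemma ex_upt: "\<not> Q 0 \<Longrightarrow> (\<exists>i\<in>set [1..<k]. Q i) = (\<exists>i<k. Q i)"
  by (auto, case_tac "i = 0", auto)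

lemma g_char: "greedy n k l \<longleftrightarrow> k \<noteq> 0 \<and> l \<noteq> 0 \<and>
   card {j. j < l \<and> greedy n k j} < n+1 \<and> card {i. i < k \<and> greedy n i l} < n+1 \<and>
   \<not>(\<exists>i<k. \<exists>j<l. greedy n i j \<and> greedy n i l \<and> greedy n k j)"
proof -
  have e: "(\<exists>i\<in>set [1..<k]. \<exists>j\<in>set [1..<l]. greedy n i j \<and> greedy n i l \<and> greedy n k j)
     = (\<exists>i<k. \<exists>j<l. greedy n i j \<and> greedy n i l \<and> greedy n k j)"
    apply (subst ex_upt, simp)
    apply (subst ex_upt, simp)
    apply (rule refl)
    done
  show ?thesis
    apply (subst greedy.simps)
    apply (simp only: e len_filter[where P="\<lambda>j. greedy n k j", OF g0(2)] len_filter[where P="\<lambda>i. greedy n i l", OF g0(1)])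
    by auto
qed

lemma row_le: "card {j. j < l \<and> greedy n k j} \<le> n+1"
proof (induction l)
  case 0 then show ?case by simp
next
  case (Suc l)
  show ?case
  proof (cases "greedy n k l")
    case True
    then have "card {j. j < l \<and> greedy n k j} < n+1" using g_char by blast
    moreover have "{j. j < Suc l \<and> greedy n k j} = insert l {j. j < l \<and> greedy n k j}"
      using True by auto
    moreover have "finite {j. j < l \<and> greedy n k j}" by simp
    ultimately show ?thesis by (simp add: card_insert_if)
  next
    case False
    then have "{j. j < Suc l \<and> greedy n k j} = {j. j < l \<and> greedy n k j}"
      using less_Suc_eq by auto
    then show ?thesis using Suc by simp
  qed
qed

lemma col_le: "card {i. i < k \<and> greedy n i l} \<le> n+1"
proof (induction k)
  case 0 then show ?case by simp
next
  case (Suc k)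
  show ?case
  proof (cases "greedy n k l")
    case True
    then have "card {i. i < k \<and> greedy n i l} < n+1" using g_char by blast
    moreover have "{i. i < Suc k \<and> greedy n i l} = insert k {i. i < k \<and> greedy n i l}"
      using True by auto
    moreover have "finite {i. i < k \<and> greedy n i l}" by simp
    ultimately show ?thesis by (simp add: card_insert_if)
  next
    case False
    then have "{i. i < Suc k \<and> greedy n i l} = {i. i < k \<and> greedy n i l}"
      using less_Suc_eq by auto
    then show ?thesis using Suc by simp
  qed
qed

lemma row_sub: assumes "finite B" "B \<subseteq> {j. greedy n k j}" shows "card B \<le> n+1"
proof (cases "B = {}")
  case True then show ?thesis by simp
next
  case False
  have "B \<subseteq> {j. j < Suc (Max B) \<and> greedy n k j}"
  proof
    fix x assume x: "x \<in> B"
    then have "x \<le> Max B" using assms(1) by simp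
    then show "x \<in> {j. j < Suc (Max B) \<and> greedy n k j}" using x assms(2) by auto
  qed
  then have "card B \<le> card {j. j < Suc (Max B) \<and> greedy n k j}"
    by (intro card_mono) auto
  then show ?thesis using row_le[of "Suc (Max B)" n k] by simp
qed

lemma row_fin: "finite {j. greedy n k j}" "card {j. greedy n k j} \<le> n+1"
proof -
  show f: "finite {j. greedy n k j}"
  proof (rule ccontr)
    assume "infinite {j. greedy n k j}"
    then obtain B where "finite B" "card B = n+2" "B \<subseteq> {j. greedy n k j}"
      using infinite_arbitrarily_large by blast
    then show False using row_sub[of B n k] by simp
  qed
  show "card {j. greedy n k j} \<le> n+1" using row_sub[OF f, of n k] by simp
qed

lemma sym: "greedy n k l = greedy n l k"
proof (induction "k+l" arbitrary: k l rule: less_induct)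
  case less
  have IH: "\<And>a b. a + b < k + l \<Longrightarrow> greedy n a b \<Longrightarrow> greedy n b a" using less by blast
  have h1: "greedy n k j = greedy n j k" if "j<l" for j
  proof -
    have "k + j < k + l" "j + k < k + l" using that by simp_all
    then show ?thesis using IH by blast
  qed
  have 1: "{j. j<l \<and> greedy n k j} = {i. i<l \<and> greedy n i k}"
    by (rule Collect_cong) (metis h1)
  have h2: "greedy n j l = greedy n l j" if "j<k" for j
  proof -
    have "l + j < k + l" "j + l < k + l" using that by simp_all
    then show ?thesis using IH by blast
  qed
  have 2: "{i. i<k \<and> greedy n i l} = {j. j<k \<and> greedy n l j}"
    by (rule Collect_cong) (metis h2)
  have 3: "(\<exists>i<k. \<exists>j<l. greedy n i j \<and> greedy n i l \<and> greedy n k j) =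
           (\<exists>i<l. \<exists>j<k. greedy n i j \<and> greedy n i k \<and> greedy n l j)"
  proof
    assume "\<exists>i<k. \<exists>j<l. greedy n i j \<and> greedy n i l \<and> greedy n k j"
    then obtain i j where h: "i<k" "j<l" "greedy n i j" "greedy n i l" "greedy n k j" by blast
    have "greedy n j i" using IH[of i j] h by linarith
    moreover have "greedy n j k" using IH[of k j] h by linarith
    moreover have "greedy n l i" using IH[of i l] h by linarith
    ultimately show "\<exists>i<l. \<exists>j<k. greedy n i j \<and> greedy n i k \<and> greedy n l j" using h by blast
  next
    assume "\<exists>i<l. \<exists>j<k. greedy n i j \<and> greedy n i k \<and> greedy n l j"
    then obtain i j where h: "i<l" "j<k" "greedy n i j" "greedy n i k" "greedy n l j" by blast
    have "greedy n j i" using IH[of i j] h by linarith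
    moreover have "greedy n j l" using IH[of l j] h by linarith
    moreover have "greedy n k i" using IH[of i k] h by linarith
    ultimately show "\<exists>i<k. \<exists>j<l. greedy n i j \<and> greedy n i l \<and> greedy n k j" using h by blast
  qed
  have A: "greedy n k l = (k\<noteq>0 \<and> l\<noteq>0 \<and> card {i. i<l \<and> greedy n i k} < n+1 \<and>
     card {j. j<k \<and> greedy n l j} < n+1 \<and>
     \<not>(\<exists>i<l. \<exists>j<k. greedy n i j \<and> greedy n i k \<and> greedy n l j))"
    using g_char[of n k l] unfolding 1 2 3 .
  have B: "greedy n l k = (l\<noteq>0 \<and> k\<noteq>0 \<and> card {j. j<k \<and> greedy n l j} < n+1 \<and>
     card {i. i<l \<and> greedy n i k} < n+1 \<and>
     \<not>(\<exists>i<l. \<exists>j<k. greedy n i j \<and> greedy n i k \<and> greedy n l j))"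
    by (rule g_char)
  show ?case using A B by blast
qed

lemma row_full: assumes "k \<noteq> 0" shows "card {j. greedy n k j} = n+1"
proof (rule ccontr)
  assume "card {j. greedy n k j} \<noteq> n+1"
  then have lt: "card {j. greedy n k j} < n+1" using row_fin(2)[of n k] by simp
  let ?A = "\<Union>i\<in>{..k}. {j. greedy n i j}"
  have "finite ?A" using row_fin(1) by blast
  then obtain L where L: "\<forall>a\<in>?A. a < L" using finite_nat_set_iff_bounded by blast
  let ?l = "Suc L"
  have nol: "\<not> greedy n i ?l" if "i \<le> k" for i
  proof
    assume "greedy n i ?l"
    then have "?l \<in> ?A" using that by blast
    then have "?l < L" using L by blast
    then show False by simp
  qed
  have c1: "card {j. j < ?l \<and> greedy n k j} < n+1"
  proof -
    have sub: "{j. j < ?l \<and> greedy n k j} \<subseteq> {j. greedy n k j}" by auto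
    show ?thesis using card_mono[OF row_fin(1)[of n k] sub] lt by linarith
  qed
  have c2: "{i. i < k \<and> greedy n i ?l} = {}" using nol by auto
  have c3: "\<not>(\<exists>i<k. \<exists>j<?l. greedy n i j \<and> greedy n i ?l \<and> greedy n k j)" using nol by auto
  have "greedy n k ?l" using g_char[of n k ?l] assms c1 c2 c3 by simp
  then show False using nol[of k] by simp
qed

lemma full_card: "card {c. n+1 \<le> card {i. i<k \<and> greedy n i c}} \<le> k - 1"
proof -
  define F where "F = {c. n+1 \<le> card {i. i<k \<and> greedy n i c}}"
  have FU: "F \<subseteq> (\<Union>i\<in>{..<k}. {j. greedy n i j})"
  proof
    fix c assume "c \<in> F"
    then have "0 < card {i. i<k \<and> greedy n i c}" unfolding F_def by simp
    then have "{i. i<k \<and> greedy n i c} \<noteq> {}" by (metis card_gt_0_iff)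
    then show "c \<in> (\<Union>i\<in>{..<k}. {j. greedy n i j})" by blast
  qed
  have Ffin: "finite F" using FU row_fin(1) by (meson finite_UN_I finite_lessThan finite_subset)
  define P where "P = {(i,c). i<k \<and> greedy n i c \<and> c \<in> F}"
  have P1: "P \<subseteq> Sigma {1..<k} (\<lambda>i. {j. greedy n i j})"
    unfolding P_def by (auto, case_tac "a = 0", auto)
  have fS: "finite (Sigma {1..<k} (\<lambda>i. {j. greedy n i j}))" using row_fin(1) by blast
  have "card P \<le> card (Sigma {1..<k} (\<lambda>i. {j. greedy n i j}))" by (rule card_mono[OF fS P1])
  also have "\<dots> = (\<Sum>i\<in>{1..<k}. card {j. greedy n i j})" using row_fin(1) by simp
  also have "\<dots> \<le> card {1..<k} * (n+1)" using sum_bounded_above[of "{1..<k}" "\<lambda>i. card {j. greedy n i j}" "n+1"] row_fin(2) by simp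
  finally have up: "card P \<le> (k - 1) * (n+1)" by simp
  have P2: "P = (\<lambda>(c,i). (i,c)) ` (Sigma F (\<lambda>c. {i. i<k \<and> greedy n i c}))"
    unfolding P_def by auto
  have inj: "inj_on (\<lambda>(c,i). (i,c)) (Sigma F (\<lambda>c. {i. i<k \<and> greedy n i c}))"
    by (auto simp: inj_on_def)
  have "card P = card (Sigma F (\<lambda>c. {i. i<k \<and> greedy n i c}))"
    unfolding P2 by (rule card_image[OF inj])
  also have "\<dots> = (\<Sum>c\<in>F. card {i. i<k \<and> greedy n i c})" using Ffin by simp
  also have "\<dots> \<ge> card F * (n+1)"
    using sum_bounded_below[of F "n+1" "\<lambda>c. card {i. i<k \<and> greedy n i c}"] unfolding F_def by simp
  finally have "card F * (n+1) \<le> (k-1) * (n+1)" using up by linarith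
  then have "card F \<le> k - 1" using mult_le_cancel2[of "card F" "n+1" "k-1"] by simp
  then show ?thesis unfolding F_def .
qed

lemma full_fin: "finite {c. n+1 \<le> card {i. i<k \<and> greedy n i c}}"
proof -
  have FU: "{c. n+1 \<le> card {i. i<k \<and> greedy n i c}} \<subseteq> (\<Union>i\<in>{..<k}. {j. greedy n i j})"
  proof
    fix c assume "c \<in> {c. n+1 \<le> card {i. i<k \<and> greedy n i c}}"
    then have "0 < card {i. i<k \<and> greedy n i c}" by simp
    then have "{i. i<k \<and> greedy n i c} \<noteq> {}" by (metis card_gt_0_iff)
    then show "c \<in> (\<Union>i\<in>{..<k}. {j. greedy n i j})" by blast
  qed
  then show ?thesis using row_fin(1) by (meson finite_UN_I finite_lessThan finite_subset)
qed

lemma band_up: assumes "greedy n k l" shows "l \<le> k + (n^3 + n)"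
proof -
  have k0: "k \<noteq> 0" and l0: "l \<noteq> 0" using assms g_char by blast+
  define F where "F = {c. n+1 \<le> card {i. i<k \<and> greedy n i c}}"
  define R where "R = {j. j<l \<and> greedy n k j}"
  define I where "I = (\<lambda>j. {i. i<k \<and> greedy n i j})"
  define B where "B = (\<Union>j\<in>R. \<Union>i\<in>I j. {c. greedy n i c} - {j})"
  have Rfin: "finite R" unfolding R_def by simp
  have cR: "card R \<le> n"
  proof -
    have "insert l R \<subseteq> {j. greedy n k j}" using assms unfolding R_def by auto
    then have "card (insert l R) \<le> n+1"
      using card_mono[OF row_fin(1)[of n k]] row_fin(2)[of n k] le_trans by blast
    moreover have "card (insert l R) = Suc (card R)" using Rfin by (simp add: R_def)
    ultimately show ?thesis by simp
  qed
  have Ifin: "finite (I j)" for j unfolding I_def by simp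
  have each: "card (\<Union>i\<in>I j. {c. greedy n i c} - {j}) \<le> n*n" if jR: "j \<in> R" for j
  proof -
    have gkj: "greedy n k j" using jR unfolding R_def by simp
    have cI: "card (I j) \<le> n" using gkj g_char[of n k j] unfolding I_def by simp
    have ci: "card ({c. greedy n i c} - {j}) = n" if "i \<in> I j" for i
    proof -
      have gij: "greedy n i j" using that unfolding I_def by simp
      then have "i \<noteq> 0" by (metis g0(1))
      then have "card {c. greedy n i c} = n+1" by (rule row_full)
      then show ?thesis using gij by (simp add: card_Diff_singleton)
    qed
    have "card (\<Union>i\<in>I j. {c. greedy n i c} - {j}) \<le> (\<Sum>i\<in>I j. card ({c. greedy n i c} - {j}))"
      by (rule card_UN_le[OF Ifin])
    also have "\<dots> = (\<Sum>i\<in>I j. n)" using ci by simp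
    also have "\<dots> = card (I j) * n" by simp
    also have "\<dots> \<le> n * n" using cI by simp
    finally show ?thesis .
  qed
  have cB: "card B \<le> n*n*n"
  proof -
    have "card B \<le> (\<Sum>j\<in>R. card (\<Union>i\<in>I j. {c. greedy n i c} - {j}))"
      unfolding B_def by (rule card_UN_le[OF Rfin])
    also have "\<dots> \<le> card R * (n*n)" using sum_bounded_above[of R _ "n*n"] each by simp
    also have "\<dots> \<le> n*n*n" using cR by simp
    finally show ?thesis .
  qed
  have cover: "{1..<l} \<subseteq> F \<union> R \<union> B"
  proof
    fix c assume c: "c \<in> {1..<l}"
    show "c \<in> F \<union> R \<union> B"
    proof (cases "c \<in> F \<or> c \<in> R")
      case True then show ?thesis by blast
    next
      case False
      then have nF: "c \<notin> F" and nR: "c \<notin> R" by auto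
      have ng: "\<not> greedy n k c" using nR c unfolding R_def by simp
      have sub: "{j. j < c \<and> greedy n k j} \<subseteq> R" using c unfolding R_def by auto
      have c1: "card {j. j < c \<and> greedy n k j} < n+1"
        using card_mono[OF Rfin sub] cR by simp
      have c2: "card {i. i < k \<and> greedy n i c} < n+1" using nF unfolding F_def by simp
      have c0: "c \<noteq> 0" using c by simp
      from ng g_char[of n k c] k0 c0 c1 c2
      obtain i j where ij: "i<k" "j<c" "greedy n i j" "greedy n i c" "greedy n k j" by blast
      have "j \<in> R" using ij c unfolding R_def by simp
      moreover have "i \<in> I j" using ij unfolding I_def by simp
      moreover have "c \<in> {c. greedy n i c} - {j}" using ij by simp
      ultimately have "c \<in> B" unfolding B_def by blast
      then show ?thesis by blast
    qed
  qed
  have Ffin: "finite F" unfolding F_def by (rule full_fin)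
  have Bfin: "finite B" unfolding B_def using Rfin Ifin row_fin(1) by blast
  have "l - 1 = card {1..<l}" by simp
  also have "\<dots> \<le> card (F \<union> R \<union> B)" using cover Ffin Rfin Bfin by (intro card_mono) auto
  also have "\<dots> \<le> card F + card R + card B" by (meson add_mono card_Un_le le_trans order_refl)
  also have "\<dots> \<le> (k - 1) + n + n*n*n" using full_card[of n k] cR cB unfolding F_def by linarith
  finally have "l - 1 \<le> (k - 1) + n + n*n*n" .
  then show ?thesis using k0 l0 by (simp add: power3_eq_cube)
qed

lemma band_low: assumes "greedy n k l" shows "k \<le> l + (n^3 + n)"
  using band_up[of n l k] assms sym[of n k l] by simp

lemma periodic:
  fixes n D t1 p :: nat
  assumes D: "D = n^3+n" and t1: "2*D+1 \<le> t1"
    and base: "\<And>i j. i < t1 \<Longrightarrow> t1 \<le> j + D \<Longrightarrow> greedy n (i+p) (j+p) = greedy n i j"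
  shows "t1 \<le> k \<Longrightarrow> 1 \<le> l \<Longrightarrow> greedy n (k+p) (l+p) = greedy n k l"
proof (induction k arbitrary: l rule: less_induct)
  case (less k)
  have bu: "\<And>a b. greedy n a b \<Longrightarrow> b \<le> a + D" using band_up D by blast
  have bl: "\<And>a b. greedy n a b \<Longrightarrow> a \<le> b + D" using band_low D by blast
  have E: "greedy n (i+p) (j+p) = greedy n i j" if "i < k" "t1 \<le> j + D" "1 \<le> j" for i j
  proof (cases "i < t1")
    case True then show ?thesis using base that by blast
  next
    case False then show ?thesis using less.IH that by simp
  qed
  have kt: "t1 \<le> k" using less.prems by simp
  show ?case using less.prems(2)
  proof (induction l rule: less_induct)
    case (less l)
    have IHl: "greedy n (k+p) (j+p) = greedy n k j" if "j < l" "1 \<le> j" for j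
      using less.IH that by blast
    show ?case
    proof (cases "l + D < k \<or> k + D < l")
      case True
      then have "\<not> greedy n k l" "\<not> greedy n (k+p) (l+p)" using bu bl by force+
      then show ?thesis by simp
    next
      case False
      then have lk: "k \<le> l + D" "l \<le> k + D" by auto
      have a: "{j. j < l+p \<and> greedy n (k+p) j} = (\<lambda>j. j+p) ` {j. j<l \<and> greedy n k j}"
      proof
        show "{j. j < l+p \<and> greedy n (k+p) j} \<subseteq> (\<lambda>j. j+p) ` {j. j<l \<and> greedy n k j}"
        proof
          fix j' assume j': "j' \<in> {j. j < l+p \<and> greedy n (k+p) j}"
          then have g: "greedy n (k+p) j'" and jl: "j' < l+p" by auto
          have "k + p \<le> j' + D" using bl[OF g] .
          then have pj: "p < j'" "1 \<le> j' - p" "j' - p < l" using kt t1 jl by linarith+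
          have "greedy n k (j'-p)" using IHl[of "j'-p"] pj g by simp
          then show "j' \<in> (\<lambda>j. j+p) ` {j. j<l \<and> greedy n k j}"
            using pj by (intro image_eqI[of _ _ "j'-p"]) auto
        qed
      next
        show "(\<lambda>j. j+p) ` {j. j<l \<and> greedy n k j} \<subseteq> {j. j < l+p \<and> greedy n (k+p) j}"
        proof
          fix x assume "x \<in> (\<lambda>j. j+p) ` {j. j<l \<and> greedy n k j}"
          then obtain j where j: "x = j+p" "j<l" "greedy n k j" by blast
          have "j \<noteq> 0" using j(3) by (metis g0(2))
          then show "x \<in> {j. j < l+p \<and> greedy n (k+p) j}" using IHl[of j] j by simp
        qed
      qed
      have b: "{i. i < k+p \<and> greedy n i (l+p)} = (\<lambda>i. i+p) ` {i. i<k \<and> greedy n i l}"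
      proof
        show "{i. i < k+p \<and> greedy n i (l+p)} \<subseteq> (\<lambda>i. i+p) ` {i. i<k \<and> greedy n i l}"
        proof
          fix i' assume i': "i' \<in> {i. i < k+p \<and> greedy n i (l+p)}"
          then have g: "greedy n i' (l+p)" and il: "i' < k+p" by auto
          have "l + p \<le> i' + D" using bu[OF g] .
          then have pi: "p \<le> i'" "i' - p < k" "t1 \<le> l + D" using kt t1 il lk by linarith+
          have "greedy n (i'-p) l" using E[of "i'-p" l] pi g less.prems by simp
          then show "i' \<in> (\<lambda>i. i+p) ` {i. i<k \<and> greedy n i l}"
            using pi by (intro image_eqI[of _ _ "i'-p"]) auto
        qed
      next
        show "(\<lambda>i. i+p) ` {i. i<k \<and> greedy n i l} \<subseteq> {i. i < k+p \<and> greedy n i (l+p)}"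
        proof
          fix x assume "x \<in> (\<lambda>i. i+p) ` {i. i<k \<and> greedy n i l}"
          then obtain i where i: "x = i+p" "i<k" "greedy n i l" by blast
          have "t1 \<le> l + D" using kt lk by linarith
          then show "x \<in> {i. i < k+p \<and> greedy n i (l+p)}" using E[of i l] i less.prems by simp
        qed
      qed
      have c: "(\<exists>i<k+p. \<exists>j<l+p. greedy n i j \<and> greedy n i (l+p) \<and> greedy n (k+p) j) =
               (\<exists>i<k. \<exists>j<l. greedy n i j \<and> greedy n i l \<and> greedy n k j)"
      proof
        assume "\<exists>i<k+p. \<exists>j<l+p. greedy n i j \<and> greedy n i (l+p) \<and> greedy n (k+p) j"
        then obtain i' j' where h: "i'<k+p" "j'<l+p" "greedy n i' j'" "greedy n i' (l+p)" "greedy n (k+p) j'"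
          by blast
        have "k + p \<le> j' + D" using bl[OF h(5)] .
        moreover have "l + p \<le> i' + D" using bu[OF h(4)] .
        ultimately have ar: "p \<le> j'" "p \<le> i'" "1 \<le> j' - p" "j' - p < l" "i' - p < k"
          "t1 \<le> (j' - p) + D" "t1 \<le> l + D"
          using kt t1 h(1,2) lk by linarith+
        have "greedy n k (j'-p)" using IHl[of "j'-p"] ar h(5) by simp
        moreover have "greedy n (i'-p) l" using E[of "i'-p" l] ar h(4) less.prems by simp
        moreover have "greedy n (i'-p) (j'-p)" using E[of "i'-p" "j'-p"] ar h(3) by simp
        ultimately show "\<exists>i<k. \<exists>j<l. greedy n i j \<and> greedy n i l \<and> greedy n k j" using ar by blast
      next
        assume "\<exists>i<k. \<exists>j<l. greedy n i j \<and> greedy n i l \<and> greedy n k j"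
        then obtain i j where h: "i<k" "j<l" "greedy n i j" "greedy n i l" "greedy n k j" by blast
        have "k \<le> j + D" using bl[OF h(5)] .
        moreover have "j \<noteq> 0" using h(5) by (metis g0(2))
        ultimately have ar: "1 \<le> j" "t1 \<le> j + D" "t1 \<le> l + D" using kt lk by linarith+
        have "greedy n (k+p) (j+p)" using IHl[of j] ar h by simp
        moreover have "greedy n (i+p) (l+p)" using E[of i l] ar h less.prems by simp
        moreover have "greedy n (i+p) (j+p)" using E[of i j] ar h by simp
        ultimately show "\<exists>i<k+p. \<exists>j<l+p. greedy n i j \<and> greedy n i (l+p) \<and> greedy n (k+p) j"
          using h by (intro exI[of _ "i+p"] conjI exI[of _ "j+p"]) auto
      qed
      have ca: "card {j. j < l+p \<and> greedy n (k+p) j} = card {j. j<l \<and> greedy n k j}"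
        unfolding a by (rule card_image) (simp add: inj_on_def)
      have cb: "card {i. i < k+p \<and> greedy n i (l+p)} = card {i. i<k \<and> greedy n i l}"
        unfolding b by (rule card_image) (simp add: inj_on_def)
      have k0: "k \<noteq> 0" using kt t1 by simp
      have l0: "l \<noteq> 0" using less.prems by simp
      show ?thesis
        using g_char[of n "k+p" "l+p"] g_char[of n k l] ca cb c k0 l0 by simp
    qed
  qed
qed

lemma poly_ineq:
  fixes M :: int assumes "0 \<le> M"
  shows "((M+1)^3+(M+1))*(2*((M+1)^3+(M+1))+1) + 1 \<le> (2*(M+1)^3 - (M+1)*((M+1)-3))^2"
proof -
  have eq: "(2*(M+1)^3 - (M+1)*((M+1)-3))^2 - (((M+1)^3+(M+1))*(2*((M+1)^3+(M+1))+1) + 1)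
     = 2*M^6+8*M^5+19*M^4+29*M^3+30*M^2+20*M+5"
    by algebra
  have "0 \<le> 2*M^6+8*M^5+19*M^4+29*M^3+30*M^2+20*M+5"
    using assms by (intro add_nonneg_nonneg mult_nonneg_nonneg zero_le_power) auto
  then show ?thesis using eq by linarith
qed

lemma sum_suc: "2 * (\<Sum>x<m. Suc x) = m * (m + 1)"
  by (induction m) (auto simp: algebra_simps)

lemma card_tri: "card (Sigma {..<2*D} (\<lambda>x. {..x})) = D * (2*D+1)"
proof -
  have "card (Sigma {..<2*D} (\<lambda>x. {..x})) = (\<Sum>x<2*D. Suc x)" by simp
  moreover have "2 * (\<Sum>x<2*D. Suc x) = 2*D * (2*D + 1)" by (rule sum_suc)
  ultimately show ?thesis by simp
qed

theorem theorem3p3: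
  fixes n :: nat
  assumes "n \<ge> 1"
  defines "\<sigma> \<equiv> 2 * int n ^ 3 - int n * (int n - 3)"
  shows "\<exists>pp p :: nat. p \<ge> 1 \<and>
           (\<forall>i j. i > pp \<longrightarrow> j \<ge> 1 \<longrightarrow> entry n (i + p) (j + p) = entry n i j) \<and>
           int (pp + p) \<le> 2 ^ nat (\<sigma> ^ 2)"
proof -
  define D where "D = n^3 + n"
  define Tri where "Tri = Sigma {..<2*D} (\<lambda>x. {..x})"
  define st where "st = (\<lambda>t. {(x,y) \<in> Tri. greedy n (t - 2*D + x) (t - D + y)})"
  define b where "b = card Tri"
  define T0 where "T0 = 2*D+1"
  have bD: "b = D * (2*D+1)" unfolding b_def Tri_def by (rule card_tri)
  have D1: "1 \<le> D" using assms(1) unfolding D_def by simp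
  have Trifin: "finite Tri" unfolding Tri_def by simp
  have "\<not> inj_on st {T0..T0 + 2^b}"
  proof
    assume inj: "inj_on st {T0..T0 + 2^b}"
    have "st ` {T0..T0 + 2^b} \<subseteq> Pow Tri" unfolding st_def by auto
    then have "card (st ` {T0..T0 + 2^b}) \<le> card (Pow Tri)"
      using Trifin by (intro card_mono) auto
    also have "\<dots> = 2^b" unfolding b_def using Trifin by (simp add: card_Pow)
    finally have "card {T0..T0 + 2^b} \<le> 2^b" using card_image[OF inj] by simp
    then show False by simp
  qed
  then obtain t1 t2 where tt: "t1 \<in> {T0..T0 + 2^b}" "t2 \<in> {T0..T0 + 2^b}" "t1 < t2" "st t1 = st t2"
    unfolding inj_on_def by (metis linorder_neq_iff)
  define p where "p = t2 - t1"
  have t1: "2*D+1 \<le> t1" using tt unfolding T0_def by simp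
  have bu: "\<And>a c. greedy n a c \<Longrightarrow> c \<le> a + D" using band_up D_def by blast
  have base: "greedy n (i+p) (j+p) = greedy n i j" if ij: "i < t1" "t1 \<le> j + D" for i j
  proof (cases "i + D < j")
    case True
    then have "\<not> greedy n i j" "\<not> greedy n (i+p) (j+p)" using bu by force+
    then show ?thesis by simp
  next
    case False
    define x where "x = i + 2*D - t1"
    define y where "y = j + D - t1"
    have xy: "(x,y) \<in> Tri" unfolding Tri_def x_def y_def using False ij by auto
    have e1: "t1 - 2*D + x = i" "t1 - D + y = j" unfolding x_def y_def using False ij t1 by auto
    have e2: "t2 - 2*D + x = i + p" "t2 - D + y = j + p"
      unfolding x_def y_def p_def using False ij t1 tt(3) by auto
    have "(x,y) \<in> st t1 \<longleftrightarrow> (x,y) \<in> st t2" using tt(4) by simp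
    then have "greedy n (t1 - 2*D + x) (t1 - D + y) = greedy n (t2 - 2*D + x) (t2 - D + y)"
      unfolding st_def using xy by simp
    then show ?thesis unfolding e1 e2 by simp
  qed
  have per: "greedy n (k+p) (l+p) = greedy n k l" if "t1 \<le> k" "1 \<le> l" for k l
    by (rule periodic[OF D_def t1 base that])
  have bnd: "int (t1 - 1 + p) \<le> 2 ^ nat (\<sigma> ^ 2)"
  proof -
    have "t1 - 1 + p = t2 - 1" unfolding p_def using tt(3) t1 by simp
    also have "\<dots> \<le> 2*D + 2^b" using tt(2) unfolding T0_def by (simp only: atLeastAtMost_iff) linarith
    also have "\<dots> \<le> 2^b + 2^b"
    proof -
      have "2*D \<le> b" unfolding bD using D1 by simp
      also have "b \<le> 2^b" by (simp add: less_imp_le)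
      finally show ?thesis by simp
    qed
    also have "\<dots> = 2^(b+1)" by simp
    also have "\<dots> \<le> 2^(nat (\<sigma>^2))"
    proof (rule power_increasing)
      obtain m where m: "n = m + 1" using assms(1) by (metis add.commute le_Suc_ex)
      have "int (b+1) = ((int m+1)^3+(int m+1)) * (2*((int m+1)^3+(int m+1))+1) + 1"
        unfolding bD D_def m by (simp add: algebra_simps)
      also have "\<dots> \<le> \<sigma>^2"
      proof -
        have s: "\<sigma> = 2*(int m+1)^3 - (int m+1)*((int m+1)-3)" unfolding \<sigma>_def m by (simp add: add.commute)
        show ?thesis unfolding s by (rule poly_ineq) simp
      qed
      finally show "b + 1 \<le> nat (\<sigma>^2)" by linarith
    qed simp
    finally have "t1 - 1 + p \<le> 2 ^ nat (\<sigma> ^ 2)" .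
    then have "int (t1 - 1 + p) \<le> int (2 ^ nat (\<sigma> ^ 2))" by (simp only: of_nat_le_iff)
    then show ?thesis by (simp only: of_nat_power of_nat_numeral)
  qed
  show ?thesis
  proof (intro exI conjI allI impI)
    show "1 \<le> p" unfolding p_def using tt(3) by simp
  next
    fix i j :: nat assume "t1 - 1 < i" "1 \<le> j"
    then show "entry n (i + p) (j + p) = entry n i j" unfolding entry_def using per[of i j] by simp
  next
    show "int (t1 - 1 + p) \<le> 2 ^ nat (\<sigma> ^ 2)" by (rule bnd)
  qed
qed

end
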